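(* Let $\lambda$ be a regular uncountable cardinal, $\kappa<\lambda$, and $\mathcal{C}=\langle\mathcal{C}_\alpha\mid\alpha<\lambda\rangle$ a coherent sequence of length $\lambda$ and width $<\kappa$. Suppose there is an unbounded $A\subseteq\lambda$ such that for every $\alpha\in A$ there is $C\in\mathcal{C}_\alpha$ with $A\cap\alpha\subseteq C$. Then $\mathcal{C}$ has a thread.
   Context: For a set of ordinals $A$, $\mathrm{acc}(A)$ is the set of $\beta<\sup\{\alpha+1\mid\alpha\in A\}$ with $\beta=\sup(A\cap\beta)$. A coherent sequence of length $\lambda$ and width $<\eta$ is $\mathcal{C}=\langle\mathcal{C}_\alpha\mid\alpha<\lambda\rangle$ where each $\mathcal{C}_\alpha$ is a nonempty set of fewer than $\eta$ closed unbounded subsets of $\alpha$ (for successor $\alpha=\beta+1$, $\mathcal{C}_\alpha=\{\{\beta\}\}$), such that for all $\beta<\lambda$, $C\in\mathcal{C}_\beta$ and $\alpha\in\mathrm{acc}(C)$, $C\cap\alpha\in\mathcal{C}_\alpha$. A thread through $\mathcal{C}$ is a club $D\subseteq\lambda$ with $D\cap\alpha\in\mathcal{C}_\alpha$ for all $\alpha\in\mathrm{acc}(D)$. *)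

theory Defs
  imports Main
begin

text \<open>The regular cardinal lambda is represented by a cardinal well-order r
  (Card_order r); ordinals below lambda are the elements of Field r, and the
  ordinal alpha is identified with its strict initial segment underS r alpha.\<close>

definition lt :: "'a rel \<Rightarrow> 'a \<Rightarrow> 'a \<Rightarrow> bool" where
  "lt r x y \<equiv> x \<noteq> y \<and> (x, y) \<in> r"

definition is_sup_below :: "'a rel \<Rightarrow> 'a set \<Rightarrow> 'a \<Rightarrow> bool" where
  "is_sup_below r A \<beta> \<equiv> \<forall>\<gamma>. lt r \<gamma> \<beta> \<longrightarrow> (\<exists>x\<in>A. lt r \<gamma> x \<and> lt r x \<beta>)"

text \<open>acc(A) = {beta < sup{alpha+1 | alpha \<in> A}. beta = sup(A \<inter> beta)};
  beta < sup{alpha+1 | alpha \<in> A} iff beta \<le> alpha for some alpha \<in> A.\<close>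
definition acc :: "'a rel \<Rightarrow> 'a set \<Rightarrow> 'a set" where
  "acc r A \<equiv> {\<beta> \<in> Field r. (\<exists>\<alpha>\<in>A. (\<beta>, \<alpha>) \<in> r) \<and> is_sup_below r A \<beta>}"

definition club_below :: "'a rel \<Rightarrow> 'a \<Rightarrow> 'a set \<Rightarrow> bool" where
  "club_below r \<alpha> C \<equiv> C \<subseteq> underS r \<alpha>
     \<and> (\<forall>\<gamma>\<in>underS r \<alpha>. \<exists>x\<in>C. lt r \<gamma> x)
     \<and> (\<forall>\<beta>\<in>underS r \<alpha>. (\<exists>x. lt r x \<beta>) \<and> is_sup_below r C \<beta> \<longrightarrow> \<beta> \<in> C)"

definition club_in :: "'a rel \<Rightarrow> 'a set \<Rightarrow> bool" where
  "club_in r D \<equiv> D \<subseteq> Field r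
     \<and> (\<forall>\<gamma>\<in>Field r. \<exists>x\<in>D. lt r \<gamma> x)
     \<and> (\<forall>\<beta>\<in>Field r. (\<exists>x. lt r x \<beta>) \<and> is_sup_below r D \<beta> \<longrightarrow> \<beta> \<in> D)"

definition is_succ :: "'a rel \<Rightarrow> 'a \<Rightarrow> 'a \<Rightarrow> bool" where
  "is_succ r \<beta> \<alpha> \<equiv> lt r \<beta> \<alpha> \<and> \<not> (\<exists>\<gamma>. lt r \<beta> \<gamma> \<and> lt r \<gamma> \<alpha>)"

definition coherent_seq :: "'a rel \<Rightarrow> 'b rel \<Rightarrow> ('a \<Rightarrow> 'a set set) \<Rightarrow> bool" where
  "coherent_seq r \<eta> \<C> \<equiv>
     (\<forall>\<alpha>\<in>Field r. \<C> \<alpha> \<noteq> {} \<and> (card_of (\<C> \<alpha>), \<eta>) \<in> ordLess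
        \<and> (\<forall>\<beta>. is_succ r \<beta> \<alpha> \<longrightarrow> \<C> \<alpha> = {{\<beta>}})
        \<and> ((\<nexists>\<beta>. is_succ r \<beta> \<alpha>) \<longrightarrow> (\<forall>C\<in>\<C> \<alpha>. club_below r \<alpha> C)))
   \<and> (\<forall>\<beta>\<in>Field r. \<forall>C\<in>\<C> \<beta>. \<forall>\<alpha>\<in>acc r C. C \<inter> underS r \<alpha> \<in> \<C> \<alpha>)"

definition thread :: "'a rel \<Rightarrow> ('a \<Rightarrow> 'a set set) \<Rightarrow> 'a set \<Rightarrow> bool" where
  "thread r \<C> D \<equiv> club_in r D \<and> (\<forall>\<alpha>\<in>acc r D. D \<inter> underS r \<alpha> \<in> \<C> \<alpha>)"

end

theory Submission imports Defs begin
unbundle cardinal_syntax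

locale ctx =
  fixes r :: "'a rel" and \<kappa> :: "'b rel" and \<C> :: "'a \<Rightarrow> 'a set set" and A :: "'a set"
  assumes co: "Card_order r" and reg: "regularCard r" and unc: "(natLeq, r) \<in> ordLess"
    and ck: "Card_order \<kappa>" and kl: "(\<kappa>, r) \<in> ordLess"
    and coh: "coherent_seq r \<kappa> \<C>"
    and AF: "A \<subseteq> Field r" and Aunb: "\<forall>\<gamma>\<in>Field r. \<exists>x\<in>A. lt r \<gamma> x"
    and AC: "\<forall>\<alpha>\<in>A. \<exists>C\<in>\<C> \<alpha>. A \<inter> underS r \<alpha> \<subseteq> C"
begin

lemma wo: "wo_rel r" using co Card_order_wo_rel by blast

lemma rtrans: "(a,b)\<in>r \<Longrightarrow> (b,c)\<in>r \<Longrightarrow> (a,c)\<in>r"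
  using wo_rel.TRANS[OF wo] unfolding trans_def by blast
lemma rantisym: "(a,b)\<in>r \<Longrightarrow> (b,a)\<in>r \<Longrightarrow> a=b"
  using wo_rel.ANTISYM[OF wo] unfolding antisym_def by blast
lemma rtotal: "a\<in>Field r \<Longrightarrow> b\<in>Field r \<Longrightarrow> (a,b)\<in>r \<or> (b,a)\<in>r"
  using wo_rel.TOTALS[OF wo] by blast
lemma rrefl: "a\<in>Field r \<Longrightarrow> (a,a)\<in>r"
  by (meson refl_onD wo_rel.REFL[OF wo])
lemma F1: "(a,b)\<in>r \<Longrightarrow> a \<in> Field r" by (simp add: FieldI1)
lemma F2: "(a,b)\<in>r \<Longrightarrow> b \<in> Field r" by (simp add: FieldI2)

lemma lt_trans: "lt r a b \<Longrightarrow> lt r b c \<Longrightarrow> lt r a c"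
  unfolding lt_def by (metis rtrans rantisym)
lemma lt_le_trans: "lt r a b \<Longrightarrow> (b,c)\<in>r \<Longrightarrow> lt r a c"
  unfolding lt_def by (metis rtrans rantisym)
lemma le_lt_trans: "(a,b)\<in>r \<Longrightarrow> lt r b c \<Longrightarrow> lt r a c"
  unfolding lt_def by (metis rtrans rantisym)
lemma lt_le: "lt r a b \<Longrightarrow> (a,b)\<in>r" unfolding lt_def by blast
lemma not_lt: "a\<in>Field r \<Longrightarrow> b\<in>Field r \<Longrightarrow> \<not> lt r a b \<Longrightarrow> (b,a)\<in>r"
  unfolding lt_def by (metis rtotal rrefl)
lemma lt_irr: "\<not> lt r a a" unfolding lt_def by blast
lemma lt_asym: "lt r a b \<Longrightarrow> \<not> lt r b a" unfolding lt_def by (metis rantisym)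
lemma lt_not_le: "lt r a b \<Longrightarrow> (b,a)\<notin>r" unfolding lt_def by (metis rantisym)
lemma lt_F1: "lt r a b \<Longrightarrow> a \<in> Field r" unfolding lt_def by (auto intro: F1)
lemma lt_F2: "lt r a b \<Longrightarrow> b \<in> Field r" unfolding lt_def by (auto intro: F2)
lemma underS_iff: "x \<in> underS r a \<longleftrightarrow> lt r x a" unfolding underS_def lt_def by blast
lemma underS_mono: "(a,b)\<in>r \<Longrightarrow> underS r a \<subseteq> underS r b"
  by (auto simp: underS_iff intro: lt_le_trans)
lemma underS_F: "underS r a \<subseteq> Field r" by (auto simp: underS_iff intro: lt_F1)

lemma maxF: "a\<in>Field r \<Longrightarrow> b\<in>Field r \<Longrightarrow> \<exists>c\<in>Field r. (a,c)\<in>r \<and> (b,c)\<in>r"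
proof -
  assume a: "a\<in>Field r" and b: "b\<in>Field r"
  show ?thesis
  proof (cases "(a,b)\<in>r")
    case True thus ?thesis using b rrefl by blast
  next
    case False hence "(b,a)\<in>r" using rtotal a b by blast
    thus ?thesis using a rrefl by blast
  qed
qed

lemma bound:
  assumes "K \<subseteq> Field r" "|K| <o r"
  shows "\<exists>u\<in>Field r. \<forall>k\<in>K. (k,u)\<in>r"
proof -
  have "\<not> cofinal K r"
  proof
    assume "cofinal K r"
    hence "|K| =o r" using reg assms(1) unfolding regularCard_def by blast
    thus False using assms(2) not_ordLess_ordIso by blast
  qed
  then obtain a where a: "a\<in>Field r" "\<forall>b\<in>K. \<not>(a \<noteq> b \<and> (a,b)\<in>r)" unfolding cofinal_def by blast
  have "\<forall>k\<in>K. (k,a)\<in>r"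
  proof
    fix k assume k: "k\<in>K"
    hence "k \<in> Field r" using assms(1) by blast
    thus "(k,a)\<in>r" using a k rtotal[of a k] rrefl[of a] by metis
  qed
  thus ?thesis using a by blast
qed

lemma pigeon:
  assumes XF: "X \<subseteq> Field r" and Xu: "\<forall>\<gamma>\<in>Field r. \<exists>x\<in>X. lt r \<gamma> x"
    and f: "\<forall>x\<in>X. f x \<in> I" and I: "|I| <o r"
  shows "\<exists>i\<in>I. \<forall>\<gamma>\<in>Field r. \<exists>x\<in>X. f x = i \<and> lt r \<gamma> x"
proof (rule ccontr)
  assume "\<not> ?thesis"
  hence "\<forall>i\<in>I. \<exists>\<gamma>. \<gamma>\<in>Field r \<and> (\<forall>x\<in>X. f x = i \<longrightarrow> \<not> lt r \<gamma> x)" by blast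
  then obtain b where b: "\<forall>i\<in>I. b i \<in> Field r \<and> (\<forall>x\<in>X. f x = i \<longrightarrow> \<not> lt r (b i) x)"
    by metis
  have h1: "|b ` I| <o r" using card_of_image[of b I] I ordLeq_ordLess_trans by blast
  have h2: "b ` I \<subseteq> Field r" using b by blast
  obtain u where u: "u\<in>Field r" "\<forall>k\<in>b ` I. (k,u)\<in>r" using bound[OF h2 h1] by blast
  obtain x where x: "x\<in>X" "lt r u x" using Xu u by blast
  have fx: "f x \<in> I" using f x by blast
  have "(b (f x), u) \<in> r" using u(2) fx by simp
  hence "lt r (b (f x)) x" using x(2) by (rule le_lt_trans)
  moreover have "\<not> lt r (b (f x)) x" using b fx x(1) by simp
  ultimately show False by simp
qed

lemma card_small: "|K| <o \<kappa> \<Longrightarrow> |K| <o r" by (rule ordLess_transitive[OF _ kl])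


lemma step_ex:
  assumes g: "\<forall>\<beta>\<in>Field r. g \<beta> \<in> Field r" and y: "y \<in> Field r"
  shows "\<exists>x. x\<in>A \<and> lt r y x \<and> (\<forall>\<beta>. (\<beta>,y)\<in>r \<longrightarrow> lt r (g \<beta>) x)"
proof -
  let ?K = "g ` underS r y"
  have K1: "|?K| <o r" using card_of_image[of g "underS r y"] card_of_underS[OF co y]
    by (rule ordLeq_ordLess_trans)
  have K2: "?K \<subseteq> Field r" using g underS_F by blast
  obtain u1 where u1: "u1\<in>Field r" "\<forall>k\<in>?K. (k,u1)\<in>r" using bound[OF K2 K1] by blast
  obtain c1 where c1: "c1\<in>Field r" "(u1,c1)\<in>r" "(g y,c1)\<in>r" using maxF[OF u1(1)] g y by blast
  obtain c2 where c2: "c2\<in>Field r" "(c1,c2)\<in>r" "(y,c2)\<in>r" using maxF[OF c1(1) y] by blast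
  obtain x where x: "x\<in>A" "lt r c2 x" using Aunb c2(1) by blast
  have "lt r y x" using c2(3) x(2) by (rule le_lt_trans)
  moreover have "\<forall>\<beta>. (\<beta>,y)\<in>r \<longrightarrow> lt r (g \<beta>) x"
  proof (intro allI impI)
    fix \<beta> assume b: "(\<beta>,y)\<in>r"
    have "(g \<beta>, c1) \<in> r"
    proof (cases "\<beta> = y")
      case True thus ?thesis using c1(3) by simp
    next
      case False hence "\<beta> \<in> underS r y" using b unfolding underS_def by blast
      hence "(g \<beta>, u1) \<in> r" using u1(2) by blast
      thus ?thesis using c1(2) by (rule rtrans)
    qed
    hence "(g \<beta>, c2) \<in> r" using c2(2) by (rule rtrans)
    thus "lt r (g \<beta>) x" using x(2) by (rule le_lt_trans)
  qed
  ultimately show ?thesis using x(1) by blast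
qed

lemma closure:
  assumes g: "\<forall>\<beta>\<in>Field r. g \<beta> \<in> Field r" and g0: "\<gamma>0 \<in> Field r"
  shows "\<exists>\<delta>\<in>acc r A. lt r \<gamma>0 \<delta> \<and> (\<forall>\<beta>. lt r \<beta> \<delta> \<longrightarrow> lt r (g \<beta>) \<delta>)"
proof -
  have "\<forall>y\<in>Field r. \<exists>x. x\<in>A \<and> lt r y x \<and> (\<forall>\<beta>. (\<beta>,y)\<in>r \<longrightarrow> lt r (g \<beta>) x)"
    using step_ex[OF g] by blast
  then obtain nx where nx: "\<And>y. y\<in>Field r \<Longrightarrow> nx y \<in> A \<and> lt r y (nx y) \<and> (\<forall>\<beta>. (\<beta>,y)\<in>r \<longrightarrow> lt r (g \<beta>) (nx y))"
    by metis
  define f where "f n = (nx ^^ n) \<gamma>0" for n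
  have fF: "f n \<in> Field r" for n
  proof (induction n)
    case 0 thus ?case using g0 by (simp add: f_def)
  next
    case (Suc n) thus ?case using nx AF by (auto simp: f_def)
  qed
  have fS: "f (Suc n) = nx (f n)" for n by (simp add: f_def)
  have fA: "f (Suc n) \<in> A" for n using nx fF fS by simp
  have finc: "lt r (f n) (f (Suc n))" for n using nx fF fS by simp
  have fg: "(\<beta>, f n)\<in>r \<Longrightarrow> lt r (g \<beta>) (f (Suc n))" for \<beta> n using nx fF fS by simp
  define UB where "UB = {u\<in>Field r. \<forall>n. (f n, u)\<in>r}"
  have R1: "|range f| <o r"
    using card_of_image[of f UNIV] card_of_nat unc ordLeq_ordIso_trans ordLeq_ordLess_trans by metis
  have R2: "range f \<subseteq> Field r" using fF by blast
  obtain u where u: "u\<in>Field r" "\<forall>k\<in>range f. (k,u)\<in>r" using bound[OF R2 R1] by blast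
  have UBne: "UB \<noteq> {}" using u unfolding UB_def by blast
  have UBF: "UB \<subseteq> Field r" unfolding UB_def by blast
  define \<delta> where "\<delta> = wo_rel.minim r UB"
  have dUB: "\<delta> \<in> UB" unfolding \<delta>_def using wo_rel.minim_in[OF wo UBF UBne] .
  have dleast: "\<And>v. v \<in> UB \<Longrightarrow> (\<delta>, v) \<in> r" unfolding \<delta>_def using wo_rel.minim_least[OF wo UBF] by blast
  have dF: "\<delta> \<in> Field r" using dUB UBF by blast
  have fd: "(f n, \<delta>) \<in> r" for n using dUB unfolding UB_def by blast
  have fltd: "lt r (f n) \<delta>" for n using finc[of n] fd[of "Suc n"] by (rule lt_le_trans)
  have below: "\<exists>n. lt r \<beta> (f n)" if b: "lt r \<beta> \<delta>" for \<beta>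
  proof (rule ccontr)
    assume "\<not> ?thesis"
    hence "\<forall>n. (f n, \<beta>) \<in> r" using not_lt fF lt_F1[OF b] by blast
    hence "\<beta> \<in> UB" unfolding UB_def using lt_F1[OF b] by blast
    hence "(\<delta>, \<beta>) \<in> r" by (rule dleast)
    thus False using lt_not_le[OF b] by blast
  qed
  have "\<delta> \<in> acc r A"
    unfolding acc_def
  proof (intro CollectI conjI)
    show "\<delta> \<in> Field r" by (rule dF)
    obtain x where "x\<in>A" "lt r \<delta> x" using Aunb dF by blast
    thus "\<exists>\<alpha>\<in>A. (\<delta>, \<alpha>) \<in> r" using lt_le by blast
    show "is_sup_below r A \<delta>" unfolding is_sup_below_def
    proof (intro allI impI)
      fix \<gamma> assume "lt r \<gamma> \<delta>"
      then obtain n where n: "lt r \<gamma> (f n)" using below by blast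
      have "lt r \<gamma> (f (Suc n))" using n finc by (rule lt_trans)
      thus "\<exists>x\<in>A. lt r \<gamma> x \<and> lt r x \<delta>" using fA fltd by blast
    qed
  qed
  moreover have "lt r \<gamma>0 \<delta>" using fltd[of 0] by (simp add: f_def)
  moreover have "\<forall>\<beta>. lt r \<beta> \<delta> \<longrightarrow> lt r (g \<beta>) \<delta>"
  proof (intro allI impI)
    fix \<beta> assume "lt r \<beta> \<delta>"
    then obtain n where "lt r \<beta> (f n)" using below by blast
    hence "lt r (g \<beta>) (f (Suc n))" using fg lt_le by blast
    thus "lt r (g \<beta>) \<delta>" using fltd lt_trans by blast
  qed
  ultimately show ?thesis by blast
qed


lemma coh_card: "\<alpha>\<in>Field r \<Longrightarrow> |\<C> \<alpha>| <o \<kappa>"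
  using coh unfolding coherent_seq_def by blast
lemma coh_succ: "\<alpha>\<in>Field r \<Longrightarrow> is_succ r \<beta> \<alpha> \<Longrightarrow> \<C> \<alpha> = {{\<beta>}}"
  using coh unfolding coherent_seq_def by blast
lemma coh_lim: "\<alpha>\<in>Field r \<Longrightarrow> \<not>(\<exists>\<beta>. is_succ r \<beta> \<alpha>) \<Longrightarrow> C\<in>\<C> \<alpha> \<Longrightarrow> club_below r \<alpha> C"
  using coh unfolding coherent_seq_def by blast
lemma coh_coh: "\<beta>\<in>Field r \<Longrightarrow> C\<in>\<C> \<beta> \<Longrightarrow> \<alpha> \<in> acc r C \<Longrightarrow> C \<inter> underS r \<alpha> \<in> \<C> \<alpha>"
  using coh unfolding coherent_seq_def by blast

lemma acc_nosucc: "\<alpha> \<in> acc r X \<Longrightarrow> \<not> is_succ r \<beta> \<alpha>"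
  unfolding acc_def is_sup_below_def is_succ_def by blast

lemma acc_F: "\<alpha> \<in> acc r X \<Longrightarrow> \<alpha> \<in> Field r" unfolding acc_def by blast

definition Cf where "Cf \<alpha> = (SOME C. C \<in> \<C> \<alpha> \<and> A \<inter> underS r \<alpha> \<subseteq> C)"

lemma Cf: "\<alpha>\<in>A \<Longrightarrow> Cf \<alpha> \<in> \<C> \<alpha> \<and> A \<inter> underS r \<alpha> \<subseteq> Cf \<alpha>"
  unfolding Cf_def using AC by (metis (no_types, lifting) someI_ex)

lemma acc_Cf:
  assumes b: "\<beta> \<in> acc r A" and a: "\<alpha>\<in>A" and ba: "lt r \<beta> \<alpha>"
  shows "\<beta> \<in> acc r (Cf \<alpha>)"
proof -
  have aF: "\<alpha>\<in>Field r" using a AF by blast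
  have bF: "\<beta>\<in>Field r" using b acc_F by blast
  have sup: "is_sup_below r A \<beta>" using b unfolding acc_def by blast
  have ex: "\<exists>x\<in>Cf \<alpha>. (\<beta>,x)\<in>r"
  proof (cases "\<exists>\<beta>'. is_succ r \<beta>' \<alpha>")
    case True
    then obtain \<beta>' where s: "is_succ r \<beta>' \<alpha>" by blast
    have "Cf \<alpha> = {\<beta>'}" using Cf[OF a] coh_succ[OF aF s] by blast
    moreover have "(\<beta>,\<beta>')\<in>r"
    proof (rule ccontr)
      assume nb: "(\<beta>,\<beta>')\<notin>r"
      have b'F: "\<beta>'\<in>Field r" using s unfolding is_succ_def using lt_F1 by blast
      have "lt r \<beta>' \<beta>" using nb bF b'F rtotal rrefl unfolding lt_def by metis
      thus False using s ba unfolding is_succ_def by blast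
    qed
    ultimately show ?thesis by blast
  next
    case False
    hence "club_below r \<alpha> (Cf \<alpha>)" using coh_lim[OF aF] Cf[OF a] by blast
    moreover have "\<beta> \<in> underS r \<alpha>" using ba underS_iff by blast
    ultimately obtain x where "x\<in>Cf \<alpha>" "lt r \<beta> x" unfolding club_below_def by blast
    thus ?thesis using lt_le by blast
  qed
  have "is_sup_below r (Cf \<alpha>) \<beta>" unfolding is_sup_below_def
  proof (intro allI impI)
    fix \<gamma> assume "lt r \<gamma> \<beta>"
    then obtain x where x: "x\<in>A" "lt r \<gamma> x" "lt r x \<beta>" using sup unfolding is_sup_below_def by blast
    have "lt r x \<alpha>" using x(3) ba by (rule lt_trans)
    hence "x \<in> Cf \<alpha>" using Cf[OF a] x(1) underS_iff by blast
    thus "\<exists>x\<in>Cf \<alpha>. lt r \<gamma> x \<and> lt r x \<beta>" using x by blast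
  qed
  thus ?thesis using ex bF unfolding acc_def by blast
qed

lemma val_in: "\<beta> \<in> acc r A \<Longrightarrow> \<alpha>\<in>A \<Longrightarrow> lt r \<beta> \<alpha> \<Longrightarrow> Cf \<alpha> \<inter> underS r \<beta> \<in> \<C> \<beta>"
  using coh_coh[of \<alpha> "Cf \<alpha>" \<beta>] acc_Cf Cf AF by blast

definition U where "U \<beta> = {E. \<forall>\<gamma>\<in>Field r. \<exists>\<alpha>\<in>A. lt r \<gamma> \<alpha> \<and> lt r \<beta> \<alpha> \<and> Cf \<alpha> \<inter> underS r \<beta> = E}"

lemma U_sub: "\<beta> \<in> acc r A \<Longrightarrow> U \<beta> \<subseteq> \<C> \<beta>"
proof
  fix E assume b: "\<beta> \<in> acc r A" and E: "E \<in> U \<beta>"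
  obtain \<alpha> where "\<alpha>\<in>A" "lt r \<beta> \<alpha>" "Cf \<alpha> \<inter> underS r \<beta> = E"
    using E acc_F[OF b] unfolding U_def by blast
  thus "E \<in> \<C> \<beta>" using val_in[OF b] by blast
qed

lemma U_card: "\<beta> \<in> acc r A \<Longrightarrow> |U \<beta>| <o \<kappa>"
  using card_of_mono1[OF U_sub] coh_card[OF acc_F] ordLeq_ordLess_trans by blast

lemma U_subS: "\<beta>\<in>Field r \<Longrightarrow> E \<in> U \<beta> \<Longrightarrow> E \<subseteq> underS r \<beta>"
  unfolding U_def by blast

lemma U_restr: "(\<beta>,\<beta>')\<in>r \<Longrightarrow> y \<in> U \<beta>' \<Longrightarrow> y \<inter> underS r \<beta> \<in> U \<beta>"
proof -
  assume bb: "(\<beta>,\<beta>')\<in>r" and y: "y \<in> U \<beta>'"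
  have sub: "underS r \<beta> \<subseteq> underS r \<beta>'" using underS_mono[OF bb] .
  show ?thesis unfolding U_def
  proof (intro CollectI ballI)
    fix \<gamma> assume "\<gamma>\<in>Field r"
    then obtain \<alpha> where a: "\<alpha>\<in>A" "lt r \<gamma> \<alpha>" "lt r \<beta>' \<alpha>" "Cf \<alpha> \<inter> underS r \<beta>' = y"
      using y unfolding U_def by blast
    have "lt r \<beta> \<alpha>" using bb a(3) by (rule le_lt_trans)
    moreover have "Cf \<alpha> \<inter> underS r \<beta> = y \<inter> underS r \<beta>" using a(4) sub by blast
    ultimately show "\<exists>\<alpha>\<in>A. lt r \<gamma> \<alpha> \<and> lt r \<beta> \<alpha> \<and> Cf \<alpha> \<inter> underS r \<beta> = y \<inter> underS r \<beta>"
      using a by blast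
  qed
qed

lemma U_ext:
  assumes b: "\<beta> \<in> acc r A" and b': "\<beta>' \<in> acc r A" and bb: "(\<beta>,\<beta>')\<in>r" and x: "x \<in> U \<beta>"
  shows "\<exists>y\<in>U \<beta>'. y \<inter> underS r \<beta> = x"
proof -
  have b'F: "\<beta>'\<in>Field r" using b' acc_F by blast
  define X where "X = {\<alpha>\<in>A. lt r \<beta> \<alpha> \<and> lt r \<beta>' \<alpha> \<and> Cf \<alpha> \<inter> underS r \<beta> = x}"
  have XF: "X \<subseteq> Field r" unfolding X_def using AF by blast
  have Xu: "\<forall>\<gamma>\<in>Field r. \<exists>a\<in>X. lt r \<gamma> a"
  proof
    fix \<gamma> assume g: "\<gamma>\<in>Field r"
    obtain c where c: "c\<in>Field r" "(\<gamma>,c)\<in>r" "(\<beta>',c)\<in>r" using maxF[OF g b'F] by blast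
    obtain \<alpha> where a: "\<alpha>\<in>A" "lt r c \<alpha>" "lt r \<beta> \<alpha>" "Cf \<alpha> \<inter> underS r \<beta> = x"
      using x c(1) unfolding U_def by blast
    have "lt r \<gamma> \<alpha>" using c(2) a(2) by (rule le_lt_trans)
    moreover have "lt r \<beta>' \<alpha>" using c(3) a(2) by (rule le_lt_trans)
    ultimately show "\<exists>a\<in>X. lt r \<gamma> a" using a unfolding X_def by blast
  qed
  have f: "\<forall>a\<in>X. Cf a \<inter> underS r \<beta>' \<in> \<C> \<beta>'" using val_in[OF b'] unfolding X_def by blast
  have I: "|\<C> \<beta>'| <o r" using card_small[OF coh_card[OF b'F]] .
  obtain i where i: "i \<in> \<C> \<beta>'" "\<forall>\<gamma>\<in>Field r. \<exists>a\<in>X. Cf a \<inter> underS r \<beta>' = i \<and> lt r \<gamma> a"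
    using pigeon[OF XF Xu f I] by blast
  have "i \<in> U \<beta>'" unfolding U_def using i(2) unfolding X_def by blast
  moreover have "i \<inter> underS r \<beta> = x"
  proof -
    obtain a where a: "a\<in>X" "Cf a \<inter> underS r \<beta>' = i" using i(2) b'F by blast
    have "underS r \<beta> \<subseteq> underS r \<beta>'" using underS_mono[OF bb] .
    thus ?thesis using a unfolding X_def by blast
  qed
  ultimately show ?thesis by blast
qed

lemma U_ne:
  assumes b: "\<beta> \<in> acc r A"
  shows "U \<beta> \<noteq> {}"
proof -
  have bF: "\<beta>\<in>Field r" using b acc_F by blast
  define X where "X = {\<alpha>\<in>A. lt r \<beta> \<alpha>}"
  have XF: "X \<subseteq> Field r" unfolding X_def using AF by blast
  have Xu: "\<forall>\<gamma>\<in>Field r. \<exists>a\<in>X. lt r \<gamma> a"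
  proof
    fix \<gamma> assume g: "\<gamma>\<in>Field r"
    obtain c where c: "c\<in>Field r" "(\<gamma>,c)\<in>r" "(\<beta>,c)\<in>r" using maxF[OF g bF] by blast
    obtain \<alpha> where a: "\<alpha>\<in>A" "lt r c \<alpha>" using Aunb c(1) by blast
    have "lt r \<gamma> \<alpha>" using c(2) a(2) by (rule le_lt_trans)
    moreover have "lt r \<beta> \<alpha>" using c(3) a(2) by (rule le_lt_trans)
    ultimately show "\<exists>a\<in>X. lt r \<gamma> a" using a unfolding X_def by blast
  qed
  have f: "\<forall>a\<in>X. Cf a \<inter> underS r \<beta> \<in> \<C> \<beta>" using val_in[OF b] unfolding X_def by blast
  have I: "|\<C> \<beta>| <o r" using card_small[OF coh_card[OF bF]] .
  obtain i where i: "i \<in> \<C> \<beta>" "\<forall>\<gamma>\<in>Field r. \<exists>a\<in>X. Cf a \<inter> underS r \<beta> = i \<and> lt r \<gamma> a"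
    using pigeon[OF XF Xu f I] by blast
  have "i \<in> U \<beta>" unfolding U_def using i(2) unfolding X_def by blast
  thus ?thesis by blast
qed


lemma unb_B: "\<gamma>\<in>Field r \<Longrightarrow> \<exists>\<delta>\<in>acc r A. lt r \<gamma> \<delta>"
  using closure[of "\<lambda>x. x" \<gamma>] by blast

lemma branch:
  assumes b0: "\<beta>0 \<in> acc r A" and x0: "x0 \<in> U \<beta>0"
    and uniq: "\<forall>\<beta>\<in>acc r A. (\<beta>0,\<beta>)\<in>r \<longrightarrow> (\<forall>y z. y\<in>U \<beta> \<longrightarrow> z\<in>U \<beta> \<longrightarrow> y \<inter> underS r \<beta>0 = x0 \<longrightarrow> z \<inter> underS r \<beta>0 = x0 \<longrightarrow> y = z)"
  shows "\<exists>D. thread r \<C> D"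
proof -
  define Bx where "Bx = {\<beta>\<in>acc r A. (\<beta>0,\<beta>)\<in>r}"
  define e where "e \<beta> = (THE y. y\<in>U \<beta> \<and> y \<inter> underS r \<beta>0 = x0)" for \<beta>
  have b0F: "\<beta>0 \<in> Field r" using b0 acc_F by blast
  have eP: "e \<beta> \<in> U \<beta> \<and> e \<beta> \<inter> underS r \<beta>0 = x0" if b: "\<beta>\<in>Bx" for \<beta>
  proof -
    have bB: "\<beta> \<in> acc r A" "(\<beta>0,\<beta>)\<in>r" using b unfolding Bx_def by blast+
    obtain y where y: "y\<in>U \<beta>" "y \<inter> underS r \<beta>0 = x0" using U_ext[OF b0 bB x0] by blast
    have "\<And>z. z\<in>U \<beta> \<and> z \<inter> underS r \<beta>0 = x0 \<Longrightarrow> z = y" using uniq bB y by blast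
    hence "(THE y. y\<in>U \<beta> \<and> y \<inter> underS r \<beta>0 = x0) = y" using y by (intro the_equality) blast+
    thus ?thesis unfolding e_def using y by simp
  qed
  have eU: "y = e \<beta>" if b: "\<beta>\<in>Bx" and y: "y\<in>U \<beta>" "y \<inter> underS r \<beta>0 = x0" for \<beta> y
    using uniq b y eP[OF b] unfolding Bx_def by blast
  have BxB: "\<beta>\<in>Bx \<Longrightarrow> \<beta> \<in> acc r A" for \<beta> unfolding Bx_def by blast
  have BxF: "\<beta>\<in>Bx \<Longrightarrow> \<beta> \<in> Field r" for \<beta> using BxB acc_F by blast
  have ecoh: "e \<beta>' \<inter> underS r \<beta> = e \<beta>" if b: "\<beta>\<in>Bx" "\<beta>'\<in>Bx" "(\<beta>,\<beta>')\<in>r" for \<beta> \<beta>'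
  proof -
    have 1: "e \<beta>' \<inter> underS r \<beta> \<in> U \<beta>" using U_restr[OF b(3)] eP[OF b(2)] by blast
    have "(\<beta>0,\<beta>)\<in>r" using b(1) unfolding Bx_def by blast
    hence "underS r \<beta>0 \<subseteq> underS r \<beta>" by (rule underS_mono)
    hence 2: "(e \<beta>' \<inter> underS r \<beta>) \<inter> underS r \<beta>0 = x0" using eP[OF b(2)] by blast
    show ?thesis using eU[OF b(1) 1 2] by simp
  qed
  have esub: "e \<beta> \<subseteq> underS r \<beta>" if "\<beta>\<in>Bx" for \<beta> using U_subS[OF BxF] eP that by blast
  define D where "D = \<Union>(e ` Bx)"
  have Dcap: "D \<inter> underS r \<beta> = e \<beta>" if b: "\<beta>\<in>Bx" for \<beta>
  proof
    show "e \<beta> \<subseteq> D \<inter> underS r \<beta>" using esub[OF b] b unfolding D_def by blast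
    show "D \<inter> underS r \<beta> \<subseteq> e \<beta>"
    proof
      fix d assume d: "d \<in> D \<inter> underS r \<beta>"
      then obtain \<beta>'' where b'': "\<beta>''\<in>Bx" "d \<in> e \<beta>''" unfolding D_def by blast
      show "d \<in> e \<beta>"
      proof (cases "(\<beta>'',\<beta>)\<in>r")
        case True thus ?thesis using ecoh[OF b''(1) b True] b'' by blast
      next
        case False hence "(\<beta>,\<beta>'')\<in>r" using rtotal BxF b b''(1) by blast
        thus ?thesis using ecoh[OF b b''(1)] b'' d by blast
      qed
    qed
  qed
  have eC: "e \<beta> \<in> \<C> \<beta>" if b: "\<beta>\<in>Bx" for \<beta> using U_sub[OF BxB[OF b]] eP[OF b] by blast
  have eclub: "club_below r \<beta> (e \<beta>)" if b: "\<beta>\<in>Bx" for \<beta>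
    using coh_lim[OF BxF[OF b] _ eC[OF b]] acc_nosucc[OF BxB[OF b]] by blast
  have Bxunb: "\<exists>\<beta>\<in>Bx. lt r \<gamma> \<beta>" if g: "\<gamma>\<in>Field r" for \<gamma>
  proof -
    obtain c where c: "c\<in>Field r" "(\<gamma>,c)\<in>r" "(\<beta>0,c)\<in>r" using maxF[OF g b0F] by blast
    obtain \<delta> where d: "\<delta>\<in>acc r A" "lt r c \<delta>" using unb_B[OF c(1)] by blast
    have "lt r \<gamma> \<delta>" using c(2) d(2) by (rule le_lt_trans)
    moreover have "(\<beta>0,\<delta>)\<in>r" using c(3) d(2) le_lt_trans lt_le by blast
    ultimately show ?thesis using d(1) unfolding Bx_def by blast
  qed
  have "thread r \<C> D"
    unfolding thread_def club_in_def
  proof (intro conjI ballI impI)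
    show "D \<subseteq> Field r" unfolding D_def using esub underS_F by blast
  next
    fix \<gamma> assume g: "\<gamma>\<in>Field r"
    obtain \<beta> where b: "\<beta>\<in>Bx" "lt r \<gamma> \<beta>" using Bxunb[OF g] by blast
    have "\<gamma> \<in> underS r \<beta>" using b(2) underS_iff by blast
    then obtain x where "x \<in> e \<beta>" "lt r \<gamma> x" using eclub[OF b(1)] unfolding club_below_def by blast
    thus "\<exists>x\<in>D. lt r \<gamma> x" using b(1) unfolding D_def by blast
  next
    fix \<beta> assume bF: "\<beta>\<in>Field r" and h: "(\<exists>x. lt r x \<beta>) \<and> is_sup_below r D \<beta>"
    obtain \<beta>' where b': "\<beta>'\<in>Bx" "lt r \<beta> \<beta>'" using Bxunb[OF bF] by blast
    have bu: "\<beta> \<in> underS r \<beta>'" using b'(2) underS_iff by blast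
    have "is_sup_below r (e \<beta>') \<beta>" unfolding is_sup_below_def
    proof (intro allI impI)
      fix \<gamma> assume "lt r \<gamma> \<beta>"
      then obtain x where x: "x\<in>D" "lt r \<gamma> x" "lt r x \<beta>" using h unfolding is_sup_below_def by blast
      have "lt r x \<beta>'" using x(3) b'(2) by (rule lt_trans)
      hence "x \<in> D \<inter> underS r \<beta>'" using x(1) underS_iff by blast
      hence "x \<in> e \<beta>'" using Dcap[OF b'(1)] by blast
      thus "\<exists>x\<in>e \<beta>'. lt r \<gamma> x \<and> lt r x \<beta>" using x by blast
    qed
    hence "\<beta> \<in> e \<beta>'" using eclub[OF b'(1)] bu h unfolding club_below_def by blast
    thus "\<beta> \<in> D" using b'(1) unfolding D_def by blast
  next
    fix \<alpha> assume a: "\<alpha> \<in> acc r D"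
    have aF: "\<alpha>\<in>Field r" using a acc_F by blast
    obtain \<beta>' where b': "\<beta>'\<in>Bx" "lt r \<alpha> \<beta>'" using Bxunb[OF aF] by blast
    have au: "\<alpha> \<in> underS r \<beta>'" using b'(2) underS_iff by blast
    obtain x where x: "x \<in> e \<beta>'" "lt r \<alpha> x" using eclub[OF b'(1)] au unfolding club_below_def by blast
    have sup: "is_sup_below r D \<alpha>" using a unfolding acc_def by blast
    have "is_sup_below r (e \<beta>') \<alpha>" unfolding is_sup_below_def
    proof (intro allI impI)
      fix \<gamma> assume "lt r \<gamma> \<alpha>"
      then obtain y where y: "y\<in>D" "lt r \<gamma> y" "lt r y \<alpha>" using sup unfolding is_sup_below_def by blast
      have "lt r y \<beta>'" using y(3) b'(2) by (rule lt_trans)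
      hence "y \<in> D \<inter> underS r \<beta>'" using y(1) underS_iff by blast
      hence "y \<in> e \<beta>'" using Dcap[OF b'(1)] by blast
      thus "\<exists>y\<in>e \<beta>'. lt r \<gamma> y \<and> lt r y \<alpha>" using y by blast
    qed
    hence "\<alpha> \<in> acc r (e \<beta>')" unfolding acc_def using aF x lt_le by blast
    hence 1: "e \<beta>' \<inter> underS r \<alpha> \<in> \<C> \<alpha>" using coh_coh[OF BxF[OF b'(1)] eC[OF b'(1)]] by blast
    have "underS r \<alpha> \<subseteq> underS r \<beta>'" using underS_mono lt_le[OF b'(2)] by blast
    hence "e \<beta>' \<inter> underS r \<alpha> = D \<inter> underS r \<alpha>" using Dcap[OF b'(1)] by blast
    thus "D \<inter> underS r \<alpha> \<in> \<C> \<alpha>" using 1 by simp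
  qed
  thus ?thesis by blast
qed


lemma no_branch:
  assumes H: "\<forall>\<beta>\<in>acc r A. \<forall>x\<in>U \<beta>. \<exists>\<beta>'\<in>acc r A. (\<beta>,\<beta>')\<in>r \<and> (\<exists>y z. y\<in>U \<beta>' \<and> z\<in>U \<beta>' \<and> y \<inter> underS r \<beta> = x \<and> z \<inter> underS r \<beta> = x \<and> y \<noteq> z)"
  shows False
proof -
  define B where "B = acc r A"
  define sp where "sp \<beta> x = (SOME \<beta>'. \<beta>'\<in>B \<and> (\<beta>,\<beta>')\<in>r \<and> (\<exists>y z. y\<in>U \<beta>' \<and> z\<in>U \<beta>' \<and> y \<inter> underS r \<beta> = x \<and> z \<inter> underS r \<beta> = x \<and> y \<noteq> z))" for \<beta> x
  have spP: "sp \<beta> x\<in>B \<and> (\<beta>,sp \<beta> x)\<in>r \<and> (\<exists>y z. y\<in>U (sp \<beta> x) \<and> z\<in>U (sp \<beta> x) \<and> y \<inter> underS r \<beta> = x \<and> z \<inter> underS r \<beta> = x \<and> y \<noteq> z)"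
    if "\<beta>\<in>B" "x\<in>U \<beta>" for \<beta> x
  proof -
    have "\<exists>\<beta>'. \<beta>'\<in>B \<and> (\<beta>,\<beta>')\<in>r \<and> (\<exists>y z. y\<in>U \<beta>' \<and> z\<in>U \<beta>' \<and> y \<inter> underS r \<beta> = x \<and> z \<inter> underS r \<beta> = x \<and> y \<noteq> z)"
      using bspec[OF bspec[OF H that(1)[unfolded B_def]] that(2)] unfolding Bex_def B_def .
    from someI_ex[OF this] show ?thesis unfolding sp_def .
  qed
  have sex: "\<exists>u\<in>Field r. \<forall>x\<in>U \<beta>. (sp \<beta> x, u)\<in>r" if b: "\<beta>\<in>B" for \<beta>
  proof -
    have K1: "|sp \<beta> ` U \<beta>| <o r"
      using card_of_image[of "sp \<beta>" "U \<beta>"] card_small[OF U_card[OF b[unfolded B_def]]]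
      by (rule ordLeq_ordLess_trans)
    have K2: "sp \<beta> ` U \<beta> \<subseteq> Field r" using spP[OF b] acc_F unfolding B_def by blast
    show ?thesis using bound[OF K2 K1] by blast
  qed
  define s where "s \<beta> = (SOME u. u\<in>Field r \<and> (\<forall>x\<in>U \<beta>. (sp \<beta> x, u)\<in>r))" for \<beta>
  have sP: "s \<beta> \<in> Field r \<and> (\<forall>x\<in>U \<beta>. (sp \<beta> x, s \<beta>)\<in>r)" if b: "\<beta>\<in>B" for \<beta>
    unfolding s_def using someI_ex[OF sex[OF b, unfolded Bex_def]] .
  define g where "g \<beta> = (if \<beta>\<in>B then s \<beta> else \<beta>)" for \<beta>
  have gF: "\<forall>\<beta>\<in>Field r. g \<beta> \<in> Field r" unfolding g_def using sP by auto
  define B' where "B' = {\<delta>\<in>B. \<forall>\<beta>. lt r \<beta> \<delta> \<longrightarrow> lt r (g \<beta>) \<delta>}"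
  have B'unb: "\<exists>\<delta>\<in>B'. lt r \<gamma> \<delta>" if "\<gamma>\<in>Field r" for \<gamma>
    using closure[OF gF that] unfolding B'_def B_def by blast
  have B'B: "B' \<subseteq> B" unfolding B'_def by blast
  have BF: "B \<subseteq> Field r" unfolding B_def using acc_F by blast
  have B'F: "B' \<subseteq> Field r" using B'B BF by blast
  have "cofinal B' r" unfolding cofinal_def using B'unb unfolding lt_def by blast
  hence B'card: "|B'| =o r" using reg B'F unfolding regularCard_def by blast
  have "|Field \<kappa>| <o r" using card_of_Field_ordIso[OF ck] kl by (rule ordIso_ordLess_trans)
  hence "|Field \<kappa>| <o |B'|" using ordIso_symmetric[OF B'card] by (rule ordLess_ordIso_trans)
  hence "|Field \<kappa>| \<le>o |B'|" by (rule ordLess_imp_ordLeq)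
  then obtain h1 where h1: "inj_on h1 (Field \<kappa>)" "h1 ` Field \<kappa> \<subseteq> B'"
    unfolding card_of_ordLeq[symmetric] by blast
  have "|UNIV::nat set| <o r" using card_of_nat unc by (rule ordIso_ordLess_trans)
  hence "|UNIV::nat set| <o |B'|" using ordIso_symmetric[OF B'card] by (rule ordLess_ordIso_trans)
  hence "|UNIV::nat set| \<le>o |B'|" by (rule ordLess_imp_ordLeq)
  then obtain h2 where h2: "inj_on h2 (UNIV::nat set)" "range h2 \<subseteq> B'"
    unfolding card_of_ordLeq[symmetric] by blast
  define S1 where "S1 = h1 ` Field \<kappa>"
  define S2 where "S2 = range h2"
  define S where "S = S1 \<union> S2"
  have SB': "S \<subseteq> B'" unfolding S_def S1_def S2_def using h1 h2 by blast
  have S1c: "|S1| <o r" unfolding S1_def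
    using card_of_image[of h1 "Field \<kappa>"] \<open>|Field \<kappa>| <o r\<close> by (rule ordLeq_ordLess_trans)
  have S2c: "|S2| <o r" unfolding S2_def
    using card_of_image[of h2 UNIV] \<open>|UNIV::nat set| <o r\<close> by (rule ordLeq_ordLess_trans)
  obtain u1 where u1: "u1\<in>Field r" "\<forall>k\<in>S1. (k,u1)\<in>r" using bound[OF _ S1c] SB' B'F unfolding S_def by blast
  obtain u2 where u2: "u2\<in>Field r" "\<forall>k\<in>S2. (k,u2)\<in>r" using bound[OF _ S2c] SB' B'F unfolding S_def by blast
  obtain c where c: "c\<in>Field r" "(u1,c)\<in>r" "(u2,c)\<in>r" using maxF[OF u1(1) u2(1)] by blast
  obtain L where L: "L\<in>B'" "lt r c L" using B'unb[OF c(1)] by blast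
  have LB: "L \<in> B" using L B'B by blast
  have SL: "lt r \<beta> L" if "\<beta>\<in>S" for \<beta>
  proof -
    have "(\<beta>,c)\<in>r" using that u1 u2 c rtrans unfolding S_def by blast
    thus ?thesis using L(2) by (rule le_lt_trans)
  qed
  have gs: "g \<beta> = s \<beta>" if "\<beta>\<in>B" for \<beta> unfolding g_def using that by simp
  have sless: "lt r (s \<beta>) \<delta>" if "\<beta>\<in>B" "\<delta>\<in>B'" "lt r \<beta> \<delta>" for \<beta> \<delta>
    using that gs unfolding B'_def by auto
  define P where "P \<beta> q = (fst q \<in> U L \<and> snd q \<in> U L \<and> fst q \<inter> underS r \<beta> = snd q \<inter> underS r \<beta>
     \<and> (\<exists>\<beta>''. (\<beta>'', s \<beta>)\<in>r \<and> fst q \<inter> underS r \<beta>'' \<noteq> snd q \<inter> underS r \<beta>''))" for \<beta> q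
  have Pex: "\<exists>q. P \<beta> q" if bS: "\<beta>\<in>S" for \<beta>
  proof -
    have bB: "\<beta> \<in> B" using bS SB' B'B by blast
    obtain x where x: "x \<in> U \<beta>" using U_ne[OF bB[unfolded B_def]] by blast
    let ?b = "sp \<beta> x"
    have bb: "?b \<in> B" "(\<beta>, ?b)\<in>r" using spP[OF bB x] by blast+
    obtain y z where yz: "y\<in>U ?b" "z\<in>U ?b" "y \<inter> underS r \<beta> = x" "z \<inter> underS r \<beta> = x" "y \<noteq> z"
      using spP[OF bB x] by blast
    have bs: "(?b, s \<beta>)\<in>r" using sP[OF bB] x by blast
    have "lt r (s \<beta>) L" using sless[OF bB L(1) SL[OF bS]] .
    hence bL: "(?b, L)\<in>r" using bs le_lt_trans lt_le by blast
    obtain y' where y': "y'\<in>U L" "y' \<inter> underS r ?b = y"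
      using U_ext[OF bb(1)[unfolded B_def] LB[unfolded B_def] bL yz(1)] by blast
    obtain z' where z': "z'\<in>U L" "z' \<inter> underS r ?b = z"
      using U_ext[OF bb(1)[unfolded B_def] LB[unfolded B_def] bL yz(2)] by blast
    have sub: "underS r \<beta> \<subseteq> underS r ?b" using underS_mono[OF bb(2)] .
    have "y' \<inter> underS r \<beta> = x" using y'(2) yz(3) sub by blast
    moreover have "z' \<inter> underS r \<beta> = x" using z'(2) yz(4) sub by blast
    ultimately have "P \<beta> (y',z')" unfolding P_def using y' z' yz(5) bs by auto
    thus ?thesis by blast
  qed
  then obtain p where p: "\<And>\<beta>. \<beta>\<in>S \<Longrightarrow> P \<beta> (p \<beta>)" by metis
  have pne: "p \<beta>1 \<noteq> p \<beta>2" if b1: "\<beta>1\<in>S" and b2: "\<beta>2\<in>S" and lt12: "lt r \<beta>1 \<beta>2" for \<beta>1 \<beta>2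
  proof
    assume eq: "p \<beta>1 = p \<beta>2"
    obtain \<beta>'' where b'': "(\<beta>'', s \<beta>1)\<in>r" "fst (p \<beta>1) \<inter> underS r \<beta>'' \<noteq> snd (p \<beta>1) \<inter> underS r \<beta>''"
      using p[OF b1] unfolding P_def by blast
    have "lt r (s \<beta>1) \<beta>2" using sless[of \<beta>1 \<beta>2] b1 b2 SB' B'B lt12 by blast
    hence "(\<beta>'', \<beta>2) \<in> r" using b''(1) le_lt_trans lt_le by blast
    hence sub: "underS r \<beta>'' \<subseteq> underS r \<beta>2" by (rule underS_mono)
    have "fst (p \<beta>2) \<inter> underS r \<beta>2 = snd (p \<beta>2) \<inter> underS r \<beta>2" using p[OF b2] unfolding P_def by blast
    hence "fst (p \<beta>2) \<inter> underS r \<beta>'' = snd (p \<beta>2) \<inter> underS r \<beta>''" using sub by blast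
    thus False using b''(2) eq by simp
  qed
  have pinj: "inj_on p S"
  proof (rule inj_onI)
    fix \<beta>1 \<beta>2 assume b1: "\<beta>1\<in>S" and b2: "\<beta>2\<in>S" and eq: "p \<beta>1 = p \<beta>2"
    show "\<beta>1 = \<beta>2"
    proof (rule ccontr)
      assume ne: "\<beta>1 \<noteq> \<beta>2"
      have "\<beta>1\<in>Field r" "\<beta>2\<in>Field r" using b1 b2 SB' B'F by blast+
      hence "lt r \<beta>1 \<beta>2 \<or> lt r \<beta>2 \<beta>1" using ne rtotal unfolding lt_def by blast
      thus False using pne[OF b1 b2] pne[OF b2 b1] eq by auto
    qed
  qed
  have pim: "p ` S \<subseteq> U L \<times> U L"
  proof
    fix q assume "q \<in> p ` S"
    then obtain \<beta> where "\<beta>\<in>S" "q = p \<beta>" by blast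
    thus "q \<in> U L \<times> U L" using p[of \<beta>] unfolding P_def by (simp add: mem_Times_iff)
  qed
  have S2inf: "infinite S2" unfolding S2_def using finite_imageD[OF _ h2(1)] infinite_UNIV_nat by blast
  have Sinf: "infinite S" unfolding S_def using S2inf by blast
  have "infinite (U L \<times> U L)"
  proof
    assume "finite (U L \<times> U L)"
    hence "finite S" using inj_on_finite[OF pinj pim] by blast
    thus False using Sinf by blast
  qed
  hence ULinf: "infinite (U L)" by auto
  have "|S| \<le>o |U L \<times> U L|" unfolding card_of_ordLeq[symmetric] using pinj pim by blast
  hence "|S| \<le>o |U L|" using card_of_Times_same_infinite[OF ULinf] by (rule ordLeq_ordIso_trans)
  moreover have "|Field \<kappa>| \<le>o |S|"
  proof -
    have "inj_on h1 (Field \<kappa>) \<and> h1 ` Field \<kappa> \<subseteq> S" using h1(1) unfolding S_def S1_def by blast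
    thus ?thesis unfolding card_of_ordLeq[symmetric] by blast
  qed
  moreover have "|U L| <o |Field \<kappa>|"
    using U_card[OF LB[unfolded B_def]] ordIso_symmetric[OF card_of_Field_ordIso[OF ck]] by (rule ordLess_ordIso_trans)
  ultimately have "|Field \<kappa>| <o |Field \<kappa>|"
    using ordLeq_transitive ordLeq_ordLess_trans by blast
  thus False using ordLess_irreflexive by blast
qed

theorem main: "\<exists>D. thread r \<C> D"
proof (cases "\<exists>\<beta>0\<in>acc r A. \<exists>x0\<in>U \<beta>0. \<forall>\<beta>\<in>acc r A. (\<beta>0,\<beta>)\<in>r \<longrightarrow> (\<forall>y z. y\<in>U \<beta> \<longrightarrow> z\<in>U \<beta> \<longrightarrow> y \<inter> underS r \<beta>0 = x0 \<longrightarrow> z \<inter> underS r \<beta>0 = x0 \<longrightarrow> y = z)")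
  case True
  then obtain \<beta>0 x0 where "\<beta>0\<in>acc r A" "x0\<in>U \<beta>0" "\<forall>\<beta>\<in>acc r A. (\<beta>0,\<beta>)\<in>r \<longrightarrow> (\<forall>y z. y\<in>U \<beta> \<longrightarrow> z\<in>U \<beta> \<longrightarrow> y \<inter> underS r \<beta>0 = x0 \<longrightarrow> z \<inter> underS r \<beta>0 = x0 \<longrightarrow> y = z)"
    by blast
  thus ?thesis by (rule branch)
next
  case False
  have "\<forall>\<beta>\<in>acc r A. \<forall>x\<in>U \<beta>. \<exists>\<beta>'\<in>acc r A. (\<beta>,\<beta>')\<in>r \<and> (\<exists>y z. y\<in>U \<beta>' \<and> z\<in>U \<beta>' \<and> y \<inter> underS r \<beta> = x \<and> z \<inter> underS r \<beta> = x \<and> y \<noteq> z)"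
  proof (intro ballI)
    fix \<beta> x assume b: "\<beta>\<in>acc r A" and x: "x\<in>U \<beta>"
    from False b x have "\<not> (\<forall>\<beta>'\<in>acc r A. (\<beta>,\<beta>')\<in>r \<longrightarrow> (\<forall>y z. y\<in>U \<beta>' \<longrightarrow> z\<in>U \<beta>' \<longrightarrow> y \<inter> underS r \<beta> = x \<longrightarrow> z \<inter> underS r \<beta> = x \<longrightarrow> y = z))"
      by simp
    thus "\<exists>\<beta>'\<in>acc r A. (\<beta>,\<beta>')\<in>r \<and> (\<exists>y z. y\<in>U \<beta>' \<and> z\<in>U \<beta>' \<and> y \<inter> underS r \<beta> = x \<and> z \<inter> underS r \<beta> = x \<and> y \<noteq> z)"
      by simp
  qed
  thus ?thesis by (rule no_branch[THEN FalseE])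
qed

end

theorem corollary2p5:
  fixes r :: "'a rel" and \<kappa> :: "'b rel" and \<C> :: "'a \<Rightarrow> 'a set set" and A :: "'a set"
  assumes "Card_order r" and "regularCard r" and "(natLeq, r) \<in> ordLess"
    and "Card_order \<kappa>" and "(\<kappa>, r) \<in> ordLess"
    and "coherent_seq r \<kappa> \<C>"
    and "A \<subseteq> Field r" and "\<forall>\<gamma>\<in>Field r. \<exists>x\<in>A. lt r \<gamma> x"
    and "\<forall>\<alpha>\<in>A. \<exists>C\<in>\<C> \<alpha>. A \<inter> underS r \<alpha> \<subseteq> C"
  shows "\<exists>D. thread r \<C> D"
  using ctx.main[OF ctx.intro[OF assms]] .

end
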